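(* Let $s\ge0$. There is $C=C(s)$, independent of $M>0$ and $T>0$, such that for all $\omega,\tilde\omega\in C([0,T];\ell^2_s(\mathbb Z))$, $$\|\mathcal N_R[\omega]\|_{C_T\ell^2_s}\le CM\|\omega\|_{C_T\ell^2_s}^3,\qquad \|\mathcal N_R[\omega]-\mathcal N_R[\tilde\omega]\|_{C_T\ell^2_s}\le CM\big(\|\omega\|_{C_T\ell^2_s}^2+\|\tilde\omega\|_{C_T\ell^2_s}^2\big)\|\omega-\tilde\omega\|_{C_T\ell^2_s}.$$
   Context: $\langle n\rangle=(1+n^2)^{1/2}$, $\|\omega\|_{\ell^2_s}=\|\langle\cdot\rangle^s\omega\|_{\ell^2}$, $C_T\ell^2_s:=C([0,T];\ell^2_s(\mathbb Z))$ with norm $\sup_{t\in[0,T]}\|\omega(t)\|_{\ell^2_s}$, $\omega^*(n):=\overline{\omega(-n)}$. Notation $n_{ij\ldots}=n_i+n_j+\cdots$, $\hat n:=n-i\mathbf 1_{\{n=0\}}$; for $n=n_{123}$: $m_1:=2i\frac{nn_{23}}{\hat n_1\hat n_2}\mathbf 1_{\{n>0\}}\mathbf 1_{\{n_{23}<0\}}\mathbf 1_{\{n_3\ne0\}}$, $\tilde m_1:=m_1\mathbf 1_{\{n_{12}n_{13}\ne0\}}$, $\Phi:=n|n|-n_1|n_1|-n_2|n_2|-n_3|n_3|$. For $M>0$, $t\in[0,T]$: $$\mathcal N_R[\omega](t,n):=\sum_{n=n_{123},\ |\Phi|\le M}e^{it\Phi}\tilde m_1(n,n_1,n_2,n_3)\,\omega(t,n_1)\omega(t,n_2)\omega^*(t,n_3)\quad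 (n>0),$$ and $\mathcal N_R[\omega](t,n):=0$ for $n\le0$. *)

theory Defs
  imports "HOL-Analysis.Analysis"
begin

definition jbr :: "int \<Rightarrow> real" where
  "jbr n = sqrt (1 + (real_of_int n)^2)"

definition in_l2s :: "real \<Rightarrow> (int \<Rightarrow> complex) \<Rightarrow> bool" where
  "in_l2s s f \<longleftrightarrow> (\<lambda>n. (jbr n powr s * cmod (f n))^2) summable_on UNIV"

definition l2s_norm :: "real \<Rightarrow> (int \<Rightarrow> complex) \<Rightarrow> real" where
  "l2s_norm s f = sqrt (\<Sum>\<^sub>\<infinity>n. (jbr n powr s * cmod (f n))^2)"

definition in_CT_l2s :: "real \<Rightarrow> real \<Rightarrow> (real \<Rightarrow> int \<Rightarrow> complex) \<Rightarrow> bool" where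
  "in_CT_l2s s T w \<longleftrightarrow>
     (\<forall>t\<in>{0..T}. in_l2s s (w t)) \<and>
     (\<forall>t0\<in>{0..T}. ((\<lambda>t. l2s_norm s (w t - w t0)) \<longlongrightarrow> 0) (at t0 within {0..T}))"

definition CT_norm :: "real \<Rightarrow> real \<Rightarrow> (real \<Rightarrow> int \<Rightarrow> complex) \<Rightarrow> real" where
  "CT_norm s T w = (SUP t\<in>{0..T}. l2s_norm s (w t))"

definition star :: "(int \<Rightarrow> complex) \<Rightarrow> int \<Rightarrow> complex" where
  "star f n = cnj (f (- n))"

definition nhat :: "int \<Rightarrow> complex" where
  "nhat n = of_int n - (if n = 0 then \<i> else 0)"

definition ind :: "bool \<Rightarrow> complex" where
  "ind b = (if b then 1 else 0)"

definition m1 :: "int \<Rightarrow> int \<Rightarrow> int \<Rightarrow> int \<Rightarrow> complex" where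
  "m1 n n1 n2 n3 = 2 * \<i> * (of_int n * of_int (n2 + n3)) / (nhat n1 * nhat n2)
     * ind (n > 0) * ind (n2 + n3 < 0) * ind (n3 \<noteq> 0)"

definition m1t :: "int \<Rightarrow> int \<Rightarrow> int \<Rightarrow> int \<Rightarrow> complex" where
  "m1t n n1 n2 n3 = m1 n n1 n2 n3 * ind ((n1 + n2) * (n1 + n3) \<noteq> 0)"

definition Phi :: "int \<Rightarrow> int \<Rightarrow> int \<Rightarrow> int \<Rightarrow> int" where
  "Phi n n1 n2 n3 = n * \<bar>n\<bar> - n1 * \<bar>n1\<bar> - n2 * \<bar>n2\<bar> - n3 * \<bar>n3\<bar>"

text \<open>The resonant part N_R[omega](t,n); the sum over n = n1+n2+n3 with |Phi| <= M is an
  unconditional (infinite-sum) sum; only finitely many terms are nonzero.\<close>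
definition NR :: "real \<Rightarrow> (real \<Rightarrow> int \<Rightarrow> complex) \<Rightarrow> real \<Rightarrow> int \<Rightarrow> complex" where
  "NR M w t n = (if n > 0 then
     (\<Sum>\<^sub>\<infinity>(n1, n2, n3) \<in> {(n1, n2, n3). n1 + n2 + n3 = n \<and> \<bar>real_of_int (Phi n n1 n2 n3)\<bar> \<le> M}.
        exp (\<i> * of_real t * of_int (Phi n n1 n2 n3)) * m1t n n1 n2 n3
        * w t n1 * w t n2 * star (w t) n3)
   else 0)"

end

theory Submission
  imports Defs
begin

definition pp :: "int \<Rightarrow> int" where "pp x = max 1 \<bar>x\<bar>"

lemma pp_ge1[simp]: "pp x \<ge> 1" and pp_pos[simp]: "pp x > 0" and pp_nn[simp]: "pp x \<ge> 0" by (auto simp: pp_def)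

lemma key_int:
  fixes n n1 n2 n3 P :: int
  assumes e: "n = n1+n2+n3" and n: "n > 0" and s: "n2+n3<0" "n3 \<noteq> 0" "n1+n2 \<noteq> 0" "n1+n3 \<noteq> 0"
   and P: "P = \<bar>n * \<bar>n\<bar> - n1 * \<bar>n1\<bar> - n2 * \<bar>n2\<bar> - n3 * \<bar>n3\<bar>\<bar>"
  shows "n * \<bar>n2+n3\<bar> * min (pp n2) (min (pp (n1+n2)) (pp (n1+n3))) \<le> P * pp n2 \<and> \<bar>n2\<bar> \<le> n + P \<and> \<bar>n3\<bar> \<le> n + P"
proof -
  have n1: "n1 > n" using e s by linarith
  have P0: "P \<ge> 0" using P by simp
  have aq: "min (pp n2) (min (pp (n1+n2)) (pp (n1+n3))) \<le> pp n2" "min (pp n2) (min (pp (n1+n2)) (pp (n1+n3))) \<le> pp (n1+n2)"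
     "min (pp n2) (min (pp (n1+n2)) (pp (n1+n3))) \<le> pp (n1+n3)" by auto
  have q0: "min (pp n2) (min (pp (n1+n2)) (pp (n1+n3))) \<ge> 1" by (auto simp: pp_def)
  define q where "q = min (pp n2) (min (pp (n1+n2)) (pp (n1+n3)))"
  show ?thesis
  proof (cases "n3 < 0")
    case True
    then show ?thesis
    proof (cases "n2 \<le> 0")
      case True
      have "P = \<bar>n*n - n1*n1 + n2*n2 + n3*n3\<bar>"
        using P n n1 True \<open>n3<0\<close> by (simp add: abs_of_pos abs_of_nonpos abs_of_neg)
      also have "n*n - n1*n1 + n2*n2 + n3*n3 = -(2*(-(n2+n3))*n + 2*n2*n3)"
        unfolding e by algebra
      finally have P1: "P = \<bar>-(2*(-(n2+n3))*n + 2*n2*n3)\<bar>" .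
      have a1: "n2*n3 \<ge> 0" using True \<open>n3<0\<close> by (simp add: mult_nonpos_nonpos)
      have a2: "(-(n2+n3))*n \<ge> 0" using s n by simp
      have a4: "2*(-(n2+n3))*n + 2*n2*n3 = 2*((-(n2+n3))*n) + 2*(n2*n3)" by (simp only: mult.assoc)
      have a3: "2*(-(n2+n3))*n + 2*n2*n3 \<ge> 0" using a1 a2 a4 by linarith
      have Pe: "P = 2*(-(n2+n3))*n + 2*n2*n3" using P1 abs_of_nonneg[OF a3] by (simp only: abs_minus_cancel)
      have "n * \<bar>n2+n3\<bar> = (-(n2+n3))*n" using s by simp
      then have h1: "n * \<bar>n2+n3\<bar> \<le> P" using Pe a1 a2 a4 by linarith
      have r1: "n * \<bar>n2+n3\<bar> * q \<le> P * pp n2"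
        by (rule mult_mono) (use h1 aq q_def n P0 in auto)
      have m0: "1*(-(n2+n3)) \<le> n*(-(n2+n3))" by (rule mult_right_mono) (use n s in auto)
      then have m: "-(n2+n3) \<le> n*(-(n2+n3))" by simp
      have m2: "n*\<bar>n2+n3\<bar> = n*(-(n2+n3))" using s by simp
      have "\<bar>n2\<bar> = -n2" "\<bar>n3\<bar> = -n3" using True \<open>n3<0\<close> by auto
      then have "\<bar>n2\<bar> \<le> n + P \<and> \<bar>n3\<bar> \<le> n+P" using h1 m m2 n True \<open>n3<0\<close> by (intro conjI; linarith)
      with r1 show ?thesis by (simp add: q_def)
    next
      case False
      have ab: "\<bar>n\<bar> = n" "\<bar>n1\<bar> = n1" "\<bar>n2\<bar> = n2" "\<bar>n3\<bar> = -n3" using n n1 False \<open>n3<0\<close> by auto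
      have "P = \<bar>n*n - n1*n1 - n2*n2 + n3*n3\<bar>"
        using P by (simp add: ab)
      also have "n*n - n1*n1 - n2*n2 + n3*n3 = 2*(-(n2+n3))*(n2 - (n1+n2+n3))"
        unfolding e by algebra
      finally have P2: "P = \<bar>2*(-(n2+n3))*(n2 - (n1+n2+n3))\<bar>" .
      have x1: "\<bar>2*(-(n2+n3))*(n2 - (n1+n2+n3))\<bar> = \<bar>2*(-(n2+n3))\<bar> * \<bar>n2 - (n1+n2+n3)\<bar>" by (rule abs_mult)
      have x2: "\<bar>2*(-(n2+n3))\<bar> = 2*(-(n2+n3))" using s by simp
      have x3: "\<bar>n2 - (n1+n2+n3)\<bar> = \<bar>n1+n3\<bar>" by simp
      have P1: "P = 2*(-(n2+n3))*\<bar>n1+n3\<bar>" using P2 x1 x2 x3 by simp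
      define k where "k = -(n2+n3)"
      define d where "d = \<bar>n1+n3\<bar>"
      have k1: "k \<ge> 1" "d \<ge> 1" using s by (auto simp: k_def d_def)
      have Pk: "P = 2*k*d" using P1 by (simp add: k_def d_def)
      have kd: "k + d \<le> 2*k*d"
      proof -
        have z: "0 \<le> (k-1)*(d-1)" using k1 by simp
        have o: "(1::int)*1 \<le> k*d" by (rule mult_mono) (use k1 in auto)
        have e2: "(k-1)*(d-1) = k*d - k - d + 1" by (simp add: algebra_simps)
        have e3: "2*k*d = 2*(k*d)" by simp
        show ?thesis using z o e2 e3 by linarith
      qed
      have dd: "d = \<bar>n - n2\<bar>" using e by (simp add: d_def)
      have r1: "n*\<bar>n2+n3\<bar>*q \<le> P * pp n2"
      proof (cases "2*n2 < n")
        case True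
        have "n * k \<le> (2*d)*k" by (rule mult_right_mono) (use True dd k1 False in auto)
        then have h1: "n*\<bar>n2+n3\<bar> \<le> P" using Pk s by (simp add: k_def algebra_simps)
        show ?thesis by (rule mult_mono) (use h1 aq q_def n P0 in auto)
      next
        case c: False
        have "n*\<bar>n2+n3\<bar>*q = (n*k)*q" using s by (simp add: k_def)
        also have "\<dots> \<le> (n*k)*d" by (rule mult_left_mono) (use aq q_def d_def dd k1 n pp_def in auto)
        also have "\<dots> = n * (k*d)" by simp
        also have "\<dots> \<le> (2*n2) * (k*d)" by (rule mult_right_mono) (use c k1 in auto)
        also have "\<dots> = P * pp n2" using Pk False by (simp add: pp_def)
        finally show ?thesis .
      qed
      have "\<bar>n2\<bar> \<le> n + P" "\<bar>n3\<bar> \<le> n+P" using kd Pk dd k1 ab by (auto simp: k_def)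
      with r1 show ?thesis by (simp add: q_def)
    qed
  next
    case F3: False
    have n3p: "n3 > 0" "n2 < 0" using F3 s by auto
      have ab: "\<bar>n\<bar> = n" "\<bar>n1\<bar> = n1" "\<bar>n2\<bar> = -n2" "\<bar>n3\<bar> = n3" using n n1 n3p by auto
      have "P = \<bar>n*n - n1*n1 + n2*n2 - n3*n3\<bar>"
        using P by (simp add: ab)
      also have "n*n - n1*n1 + n2*n2 - n3*n3 = 2*(-(n2+n3))*(n3 - (n1+n2+n3))"
        unfolding e by algebra
      finally have P2: "P = \<bar>2*(-(n2+n3))*(n3 - (n1+n2+n3))\<bar>" .
      have x1: "\<bar>2*(-(n2+n3))*(n3 - (n1+n2+n3))\<bar> = \<bar>2*(-(n2+n3))\<bar> * \<bar>n3 - (n1+n2+n3)\<bar>" by (rule abs_mult)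
      have x2: "\<bar>2*(-(n2+n3))\<bar> = 2*(-(n2+n3))" using s by simp
      have x3: "\<bar>n3 - (n1+n2+n3)\<bar> = \<bar>n1+n2\<bar>" by simp
      have P1: "P = 2*(-(n2+n3))*\<bar>n1+n2\<bar>" using P2 x1 x2 x3 by simp
      define k where "k = -(n2+n3)"
      define d where "d = \<bar>n1+n2\<bar>"
      have k1: "k \<ge> 1" "d \<ge> 1" using s by (auto simp: k_def d_def)
      have Pk: "P = 2*k*d" using P1 by (simp add: k_def d_def)
      have kd: "k + d \<le> 2*k*d"
      proof -
        have z: "0 \<le> (k-1)*(d-1)" using k1 by simp
        have o: "(1::int)*1 \<le> k*d" by (rule mult_mono) (use k1 in auto)
        have e2: "(k-1)*(d-1) = k*d - k - d + 1" by (simp add: algebra_simps)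
        have e3: "2*k*d = 2*(k*d)" by simp
        show ?thesis using z o e2 e3 by linarith
      qed
      have dd: "d = \<bar>n - n3\<bar>" using e by (simp add: d_def)
      have r1: "n*\<bar>n2+n3\<bar>*q \<le> P * pp n2"
      proof (cases "2*n3 < n")
        case True
        have "n * k \<le> (2*d)*k" by (rule mult_right_mono) (use True dd k1 n3p in auto)
        then have h1: "n*\<bar>n2+n3\<bar> \<le> P" using Pk s by (simp add: k_def algebra_simps)
        show ?thesis by (rule mult_mono) (use h1 aq q_def n P0 in auto)
      next
        case c: False
        have "n*\<bar>n2+n3\<bar>*q = (n*k)*q" using s by (simp add: k_def)
        also have "\<dots> \<le> (n*k)*d" by (rule mult_left_mono) (use aq q_def d_def k1 n pp_def in auto)
        also have "\<dots> = n * (k*d)" by simp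
        also have "\<dots> \<le> (2*n3) * (k*d)" by (rule mult_right_mono) (use c k1 in auto)
        also have "\<dots> \<le> (2*(-n2)) * (k*d)" by (rule mult_right_mono) (use s k1 in auto)
        also have "\<dots> = P * pp n2" using Pk n3p by (simp add: pp_def)
        finally show ?thesis .
      qed
      have "\<bar>n2\<bar> \<le> n + P" "\<bar>n3\<bar> \<le> n+P" using kd Pk dd k1 ab by (auto simp: k_def)
      with r1 show ?thesis by (simp add: q_def)
  qed
qed


lemma psum_bound:
  fixes g :: "'a \<Rightarrow> real"
  assumes nn: "\<And>x. g x \<ge> 0" and b: "\<And>F. finite F \<Longrightarrow> sum g F \<le> B"
  shows "g summable_on UNIV" "infsum g UNIV \<le> B"
proof -
  show s: "g summable_on UNIV"
    by (rule nonneg_bdd_above_summable_on) (use nn b in \<open>auto simp: bdd_above_def\<close>)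
  show "infsum g UNIV \<le> B" by (rule infsum_le_finite_sums[OF s]) (use b in auto)
qed

definition wt :: "real \<Rightarrow> (int \<Rightarrow> complex) \<Rightarrow> int \<Rightarrow> real" where
  "wt s f n = jbr n powr s * cmod (f n)"

definition nsq :: "real \<Rightarrow> (int \<Rightarrow> complex) \<Rightarrow> real" where
  "nsq s f = infsum (\<lambda>n. (wt s f n)^2) UNIV"

lemma in_l2s_wt: "in_l2s s f \<longleftrightarrow> (\<lambda>n. (wt s f n)^2) summable_on UNIV"
  by (simp add: in_l2s_def wt_def)

lemma l2s_norm_nsq: "l2s_norm s f = sqrt (nsq s f)"
  by (simp add: l2s_norm_def nsq_def wt_def)

lemma nsq_nonneg: "nsq s f \<ge> 0"
  unfolding nsq_def by (rule infsum_nonneg) simp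

lemma l2s_norm_nonneg: "l2s_norm s f \<ge> 0"
  by (simp add: l2s_norm_nsq nsq_nonneg)

lemma nsq_eq: "nsq s f = (l2s_norm s f)^2"
  by (simp add: l2s_norm_nsq nsq_nonneg)

lemma jbr_ge1: "jbr n \<ge> 1"
  unfolding jbr_def by simp

lemma jbr_powr_ge1: "s \<ge> 0 \<Longrightarrow> jbr n powr s \<ge> 1"
  using jbr_ge1 ge_one_powr_ge_zero by blast

lemma jbr_mono: "\<bar>n\<bar> \<le> \<bar>m\<bar> \<Longrightarrow> s \<ge> 0 \<Longrightarrow> jbr n powr s \<le> jbr m powr s"
proof -
  assume a: "\<bar>n\<bar> \<le> \<bar>m\<bar>" "s \<ge> 0"
  have "(real_of_int n)^2 \<le> (real_of_int m)^2"
    using a by (metis abs_le_square_iff of_int_abs of_int_le_iff)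
  then have "jbr n \<le> jbr m" unfolding jbr_def by simp
  moreover have "0 \<le> jbr n" using jbr_ge1[of n] by linarith
  ultimately show ?thesis using a by (intro powr_mono2) auto
qed

lemma wt_nonneg: "wt s f n \<ge> 0"
  unfolding wt_def by simp

lemma fin_le_nsq: "in_l2s s f \<Longrightarrow> finite F \<Longrightarrow> sum (\<lambda>n. (wt s f n)^2) F \<le> nsq s f"
  unfolding nsq_def in_l2s_wt by (rule finite_sum_le_infsum) auto

lemma L2_le_norm: "in_l2s s f \<Longrightarrow> finite F \<Longrightarrow> L2_set (wt s f) F \<le> l2s_norm s f"
  unfolding L2_set_def l2s_norm_nsq using fin_le_nsq real_sqrt_le_mono by blast

lemma l2s_comb:
  assumes a: "in_l2s s a" and b: "in_l2s s b" and c: "\<And>n. cmod (c n) \<le> cmod (a n) + cmod (b n)"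
  shows "in_l2s s c" "l2s_norm s c \<le> l2s_norm s a + l2s_norm s b"
proof -
  have fb: "sum (\<lambda>n. (wt s c n)^2) F \<le> (l2s_norm s a + l2s_norm s b)^2" if F: "finite F" for F
  proof -
    have "L2_set (wt s c) F \<le> L2_set (\<lambda>n. wt s a n + wt s b n) F"
      by (rule L2_set_mono) (auto simp: wt_def wt_nonneg c distrib_left[symmetric] intro: mult_left_mono)
    also have "\<dots> \<le> L2_set (wt s a) F + L2_set (wt s b) F" by (rule L2_set_triangle_ineq)
    also have "\<dots> \<le> l2s_norm s a + l2s_norm s b" using L2_le_norm[OF a F] L2_le_norm[OF b F] by simp
    finally have "L2_set (wt s c) F \<le> l2s_norm s a + l2s_norm s b" .
    moreover have "L2_set (wt s c) F \<ge> 0" by (rule L2_set_nonneg)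
    ultimately have "(L2_set (wt s c) F)^2 \<le> (l2s_norm s a + l2s_norm s b)^2"
      by (intro power_mono) auto
    then show ?thesis unfolding L2_set_def by (simp add: sum_nonneg)
  qed
  have nn: "\<And>n. (wt s c n)^2 \<ge> 0" by simp
  show "in_l2s s c" unfolding in_l2s_wt by (rule psum_bound(1)[OF nn fb])
  have "nsq s c \<le> (l2s_norm s a + l2s_norm s b)^2" unfolding nsq_def by (rule psum_bound(2)[OF nn fb])
  then show "l2s_norm s c \<le> l2s_norm s a + l2s_norm s b"
    unfolding l2s_norm_nsq using nsq_nonneg
    by (metis add_nonneg_nonneg real_sqrt_ge_zero real_le_lsqrt)
qed



lemma aux_ineq: assumes x: "x \<ge> (1::real)" shows "2 / x^2 + 4 / (x + 1) \<le> 4 / x"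
proof -
  have p: "x > 0" "x + 1 > 0" "x^2*(x+1) > 0" using x by auto
  have e1: "(2 / x^2 + 4 / (x + 1)) * (x^2*(x+1)) = 2*(x+1) + 4*x^2"
    using p by (simp add: field_simps power2_eq_square)
  have e2: "(4/x) * (x^2*(x+1)) = 4*x*(x+1)"
    using p by (simp add: field_simps power2_eq_square)
  have "2*(x+1) + 4*x^2 \<le> 4*x*(x+1)" using x by (simp add: algebra_simps power2_eq_square)
  then have "(2 / x^2 + 4 / (x + 1)) * (x^2*(x+1)) \<le> (4/x) * (x^2*(x+1))" using e1 e2 by simp
  then show ?thesis using p(3) mult_le_cancel_right_pos by blast
qed

lemma zeta_interval: "(\<Sum>a\<in>{-int N..int N}. 1 / (real_of_int (pp a))^2) \<le> 5 - 4 / (real N + 1)"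
proof (induction N)
  case 0
  then show ?case by (simp add: pp_def)
next
  case (Suc N)
  have set: "{-int (Suc N)..int (Suc N)} = insert (int N + 1) (insert (-(int N + 1)) {-int N..int N})"
    by auto
  have pa: "pp (int N + 1) = int N + 1" "pp (-(int N + 1)) = int N + 1" "pp (- int N - 1) = int N + 1" by (auto simp: pp_def)
  have "(\<Sum>a\<in>{-int (Suc N)..int (Suc N)}. 1 / (real_of_int (pp a))^2)
       = 2 / (real N + 1)^2 + (\<Sum>a\<in>{-int N..int N}. 1 / (real_of_int (pp a))^2)"
    unfolding set by (simp add: pa)
  also have "\<dots> \<le> 2 / (real N + 1)^2 + (5 - 4 / (real N + 1))" using Suc by simp
  also have "\<dots> \<le> 5 - 4 / (real (Suc N) + 1)"
  proof -
    have "2 / (real N + 1)^2 + 4 / ((real N + 1) + 1) \<le> 4 / (real N + 1)"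
      by (rule aux_ineq) simp
    then show ?thesis by simp
  qed
  finally show ?case .
qed

lemma zeta_fin: "finite A \<Longrightarrow> (\<Sum>a\<in>A. 1 / (real_of_int (pp a))^2) \<le> 5"
proof -
  assume f: "finite A"
  define N where "N = nat (Max (abs ` A))"
  have N: "A \<subseteq> {-int N..int N}"
  proof
    fix a assume a: "a \<in> A"
    then have "\<bar>a\<bar> \<le> Max (abs ` A)" using f by (simp add: Max_ge)
    then show "a \<in> {-int N..int N}" unfolding N_def by auto
  qed
  have "(\<Sum>a\<in>A. 1 / (real_of_int (pp a))^2) \<le> (\<Sum>a\<in>{-int N..int N}. 1 / (real_of_int (pp a))^2)"
    by (rule sum_mono2) (use N in auto)
  also have "\<dots> \<le> 5" using zeta_interval[of N] by (smt (verit) divide_nonneg_nonneg of_nat_0_le_iff)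
  finally show ?thesis .
qed

definition hh :: "int \<times> int \<Rightarrow> real" where
  "hh p = 1 / (real_of_int (pp (fst p)))^2 * (1 / (real_of_int (pp (snd p)))^2)"

lemma hh_nonneg: "hh p \<ge> 0" by (simp add: hh_def)

lemma inj_sum:
  assumes f: "finite G" and i: "inj_on \<phi> G"
  shows "(\<Sum>g\<in>G. hh (\<phi> g)) \<le> 25"
proof -
  define A where "A = fst ` \<phi> ` G"
  define B where "B = snd ` \<phi> ` G"
  have fA: "finite A" "finite B" using f by (auto simp: A_def B_def)
  have "(\<Sum>g\<in>G. hh (\<phi> g)) = (\<Sum>p\<in>\<phi> ` G. hh p)" using sum.reindex[OF i, of hh] by simp
  also have "\<dots> \<le> (\<Sum>p\<in>A \<times> B. hh p)"
  proof (rule sum_mono2)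
    show "\<phi> ` G \<subseteq> A \<times> B"
    proof
      fix p assume "p \<in> \<phi> ` G"
      then show "p \<in> A \<times> B" unfolding A_def B_def by (metis imageI mem_Times_iff)
    qed
  qed (use fA hh_nonneg in auto)
  also have "\<dots> = (\<Sum>a\<in>A. 1 / (real_of_int (pp a))^2) * (\<Sum>b\<in>B. 1 / (real_of_int (pp b))^2)"
    unfolding hh_def sum_product sum.cartesian_product by (rule sum.cong) (auto simp: case_prod_beta)
  also have "\<dots> \<le> 5 * 5"
    by (rule mult_mono) (use zeta_fin fA in \<open>auto intro: sum_nonneg\<close>)
  finally show ?thesis by simp
qed



lemma m1t_nz:
  assumes "m1t n n1 n2 n3 \<noteq> 0"
  shows "n > 0" "n2+n3 < 0" "n3 \<noteq> 0" "n1+n2 \<noteq> 0" "n1+n3 \<noteq> 0"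
  using assms unfolding m1t_def m1_def ind_def by (auto split: if_splits)

lemma cmod_nhat: "cmod (nhat x) = real_of_int (pp x)"
  by (cases "x = 0") (auto simp: nhat_def pp_def)

lemma cmod_m1t:
  assumes "n > 0" "n2+n3 < 0" "n3 \<noteq> 0" "n1+n2 \<noteq> 0" "n1+n3 \<noteq> 0"
  shows "cmod (m1t n n1 n2 n3) = 2 * real_of_int n * real_of_int \<bar>n2+n3\<bar> / (real_of_int (pp n1) * real_of_int (pp n2))"
proof -
  have "m1t n n1 n2 n3 = 2 * \<i> * (of_int n * of_int (n2 + n3)) / (nhat n1 * nhat n2)"
    using assms unfolding m1t_def m1_def ind_def by simp
  then show ?thesis using assms
    by (simp only: norm_mult norm_divide cmod_nhat norm_of_int of_int_abs) simp
qed

lemma m1t_bound: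
  assumes nz: "m1t n n1 n2 n3 \<noteq> 0" and e: "n = n1+n2+n3"
    and PM: "\<bar>real_of_int (Phi n n1 n2 n3)\<bar> \<le> M"
  shows "(cmod (m1t n n1 n2 n3))^2 \<le> 4*M^2*(hh (n2, n2+n3) + hh (n1+n2, n2+n3) + hh (n1+n3, n2+n3))"
    and "\<bar>n2\<bar> \<le> n + \<lceil>M\<rceil>" "\<bar>n3\<bar> \<le> n + \<lceil>M\<rceil>"
proof -
  note c = m1t_nz[OF nz]
  define P where "P = \<bar>Phi n n1 n2 n3\<bar>"
  define q where "q = min (pp n2) (min (pp (n1+n2)) (pp (n1+n3)))"
  have K: "n * \<bar>n2+n3\<bar> * q \<le> P * pp n2 \<and> \<bar>n2\<bar> \<le> n + P \<and> \<bar>n3\<bar> \<le> n + P"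
    unfolding q_def by (rule key_int[OF e c]) (simp add: P_def Phi_def)
  have PMr: "real_of_int P \<le> M" using PM by (simp add: P_def)
  then have PC: "P \<le> \<lceil>M\<rceil>" by linarith
  show "\<bar>n2\<bar> \<le> n + \<lceil>M\<rceil>" "\<bar>n3\<bar> \<le> n + \<lceil>M\<rceil>" using K PC by auto
  have n1: "n1 > n" using e c by linarith
  have ppn1: "pp n1 = n1" using n1 c by (simp add: pp_def)
  define k where "k = pp (n2+n3)"
  have k: "k = \<bar>n2+n3\<bar>" "k \<ge> 1" "k \<le> n1" using c e by (auto simp: k_def pp_def)
  have q1: "q \<ge> 1" by (simp add: q_def)
  define cm where "cm = cmod (m1t n n1 n2 n3)"
  have cm: "cm = 2 * real_of_int n * real_of_int k / (real_of_int n1 * real_of_int (pp n2))"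
    unfolding cm_def using cmod_m1t[OF c] ppn1 k by simp
  have Kr: "real_of_int n * real_of_int k * real_of_int q \<le> M * real_of_int (pp n2)"
  proof -
    have "real_of_int (n * \<bar>n2+n3\<bar> * q) \<le> real_of_int (P * pp n2)" using K by linarith
    also have "\<dots> \<le> M * real_of_int (pp n2)" using PMr by (simp add: mult_right_mono)
    finally show ?thesis using k by simp
  qed
  have ppn2: "pp n2 \<noteq> 0" using pp_pos[of n2] by linarith
  have cq: "cm * real_of_int n1 * real_of_int q \<le> 2 * M"
  proof -
    have "cm * real_of_int n1 * real_of_int q = 2 * (real_of_int n * real_of_int k * real_of_int q) / real_of_int (pp n2)"
      unfolding cm using n1 c by (simp add: field_simps)
    also have "\<dots> \<le> 2 * (M * real_of_int (pp n2)) / real_of_int (pp n2)"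
      using Kr by (intro divide_right_mono mult_left_mono) auto
    also have "\<dots> = 2 * M" using ppn2 by simp
    finally show ?thesis .
  qed
  have cm0: "cm \<ge> 0" by (simp add: cm_def)
  have ckq: "cm * real_of_int k * real_of_int q \<le> 2 * M"
  proof -
    have "cm * real_of_int k * real_of_int q \<le> cm * real_of_int n1 * real_of_int q"
      using k q1 cm0 by (intro mult_right_mono mult_left_mono) auto
    then show ?thesis using cq by linarith
  qed
  have M0: "M \<ge> 0" using PM by linarith
  have sq: "cm^2 * (real_of_int k)^2 * (real_of_int q)^2 \<le> (2*M)^2"
  proof -
    have "(cm * real_of_int k * real_of_int q)^2 \<le> (2*M)^2"
      using ckq cm0 k q1 by (intro power_mono) auto
    then show ?thesis by (simp add: power_mult_distrib)
  qed
  have kq0: "(real_of_int k)^2 * (real_of_int q)^2 > 0" using k q1 by simp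
  have kne: "k \<noteq> 0" "q \<noteq> 0" using k q1 by linarith+
  have cm2: "cm^2 \<le> 4 * M^2 * (1 / (real_of_int q)^2 * (1 / (real_of_int k)^2))"
  proof -
    have "cm^2 = cm^2 * (real_of_int k)^2 * (real_of_int q)^2 / ((real_of_int k)^2 * (real_of_int q)^2)"
      using kne by simp
    also have "\<dots> \<le> (2*M)^2 / ((real_of_int k)^2 * (real_of_int q)^2)"
      using sq kq0 by (intro divide_right_mono) auto
    also have "\<dots> = 4 * M^2 * (1 / (real_of_int q)^2 * (1 / (real_of_int k)^2))"
      by (simp add: power_mult_distrib field_simps)
    finally show ?thesis .
  qed
  have iq: "1 / (real_of_int q)^2 \<le> 1 / (real_of_int (pp n2))^2 + 1 / (real_of_int (pp (n1+n2)))^2 + 1 / (real_of_int (pp (n1+n3)))^2"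
    unfolding q_def by (auto simp: min_def)
  have "cm^2 \<le> 4 * M^2 * ((1 / (real_of_int (pp n2))^2 + 1 / (real_of_int (pp (n1+n2)))^2 + 1 / (real_of_int (pp (n1+n3)))^2) * (1 / (real_of_int k)^2))"
    using cm2 iq M0 by (smt (verit) mult_left_mono mult_right_mono zero_le_divide_1_iff zero_le_power2 mult_nonneg_nonneg)
  then show "(cmod (m1t n n1 n2 n3))^2 \<le> 4*M^2*(hh (n2, n2+n3) + hh (n1+n2, n2+n3) + hh (n1+n3, n2+n3))"
    unfolding cm_def hh_def k_def by (simp add: add_divide_distrib divide_divide_eq_left)
qed



lemma inner_bound:
  assumes f: "finite G" and G: "\<And>b c. (b,c) \<in> G \<Longrightarrow> m1t (a+b+c) a b c \<noteq> 0 \<and> \<bar>real_of_int (Phi (a+b+c) a b c)\<bar> \<le> M"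
  shows "(\<Sum>(b,c)\<in>G. (cmod (m1t (a+b+c) a b c))^2) \<le> 300 * M^2"
proof -
  have "(\<Sum>(b,c)\<in>G. (cmod (m1t (a+b+c) a b c))^2)
      \<le> (\<Sum>(b,c)\<in>G. 4*M^2*(hh (b, b+c) + hh (a+b, b+c) + hh (a+c, b+c)))"
    by (rule sum_mono) (use G m1t_bound(1) in auto)
  also have "\<dots> = 4*M^2*((\<Sum>g\<in>G. hh ((\<lambda>(b,c). (b, b+c)) g)) + (\<Sum>g\<in>G. hh ((\<lambda>(b,c). (a+b, b+c)) g))
        + (\<Sum>g\<in>G. hh ((\<lambda>(b,c). (a+c, b+c)) g)))"
    by (simp add: sum_distrib_left sum.distrib case_prod_beta distrib_left)
  also have "\<dots> \<le> 4*M^2*(25+25+25)"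
  proof -
    have "(\<Sum>g\<in>G. hh ((\<lambda>(b,c). (b, b+c)) g)) \<le> 25"
      by (rule inj_sum[OF f]) (auto simp: inj_on_def)
    moreover have "(\<Sum>g\<in>G. hh ((\<lambda>(b,c). (a+b, b+c)) g)) \<le> 25"
      by (rule inj_sum[OF f]) (auto simp: inj_on_def)
    moreover have "(\<Sum>g\<in>G. hh ((\<lambda>(b,c). (a+c, b+c)) g)) \<le> 25"
      by (rule inj_sum[OF f]) (auto simp: inj_on_def)
    ultimately show ?thesis by (intro mult_left_mono) auto
  qed
  finally show ?thesis by simp
qed

lemma prod_sum_bound:
  fixes F H :: "int \<Rightarrow> real"
  assumes f: "finite G" and nn: "\<And>a. F a \<ge> 0" "\<And>a. H a \<ge> 0"
  shows "(\<Sum>g\<in>G. F (fst g) * H (snd g)) \<le> (\<Sum>a\<in>fst ` G. F a) * (\<Sum>b\<in>snd ` G. H b)"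
proof -
  have "(\<Sum>g\<in>G. F (fst g) * H (snd g)) \<le> (\<Sum>g\<in>fst ` G \<times> snd ` G. F (fst g) * H (snd g))"
  proof (rule sum_mono2)
    show "G \<subseteq> fst ` G \<times> snd ` G" by (auto intro: rev_image_eqI)
  qed (use f nn in \<open>auto intro: mult_nonneg_nonneg\<close>)
  also have "\<dots> = (\<Sum>a\<in>fst ` G. F a) * (\<Sum>b\<in>snd ` G. H b)"
    unfolding sum_product sum.cartesian_product by (rule sum.cong) auto
  finally show ?thesis .
qed



definition Iset :: "real \<Rightarrow> int \<Rightarrow> (int \<times> int \<times> int) set" where
  "Iset M n = {(n1, n2, n3). n1 + n2 + n3 = n \<and> \<bar>real_of_int (Phi n n1 n2 n3)\<bar> \<le> M}"

definition Jset :: "real \<Rightarrow> int \<Rightarrow> (int \<times> int \<times> int) set" where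
  "Jset M n = {(n1, n2, n3). n1 + n2 + n3 = n \<and> \<bar>real_of_int (Phi n n1 n2 n3)\<bar> \<le> M \<and> m1t n n1 n2 n3 \<noteq> 0}"

definition summ :: "real \<Rightarrow> (int \<Rightarrow> complex) \<Rightarrow> (int \<Rightarrow> complex) \<Rightarrow> (int \<Rightarrow> complex) \<Rightarrow> int \<Rightarrow> int \<times> int \<times> int \<Rightarrow> complex" where
  "summ t u v x n = (\<lambda>(n1, n2, n3). exp (\<i> * of_real t * of_int (Phi n n1 n2 n3)) * m1t n n1 n2 n3
        * u n1 * v n2 * star x n3)"

definition Tri :: "real \<Rightarrow> real \<Rightarrow> (int \<Rightarrow> complex) \<Rightarrow> (int \<Rightarrow> complex) \<Rightarrow> (int \<Rightarrow> complex) \<Rightarrow> int \<Rightarrow> complex" where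
  "Tri M t u v x n = (if n > 0 then infsum (summ t u v x n) (Iset M n) else 0)"

lemma NR_Tri: "NR M w t = Tri M t (w t) (w t) (w t)"
  unfolding NR_def Tri_def Iset_def summ_def by (rule ext) simp

lemma J_finite: "finite (Jset M n)"
proof -
  define N where "N = \<bar>n\<bar> + \<lceil>M\<rceil>"
  have "Jset M n \<subseteq> (\<lambda>(a,b). (n-a-b, a, b)) ` ({-N..N} \<times> {-N..N})"
  proof
    fix p assume p: "p \<in> Jset M n"
    obtain n1 n2 n3 where pe: "p = (n1,n2,n3)" by (cases p) auto
    have h: "n1+n2+n3 = n" "\<bar>real_of_int (Phi n n1 n2 n3)\<bar> \<le> M" "m1t n n1 n2 n3 \<noteq> 0"
      using p pe by (auto simp: Jset_def)
    have "\<bar>n2\<bar> \<le> n + \<lceil>M\<rceil>" "\<bar>n3\<bar> \<le> n + \<lceil>M\<rceil>"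
      using m1t_bound(2,3)[OF h(3) h(1)[symmetric] h(2)] by auto
    then have "(n2, n3) \<in> {-N..N} \<times> {-N..N}" unfolding N_def by auto
    moreover have "p = (\<lambda>(a,b). (n-a-b, a, b)) (n2, n3)" using pe h by auto
    ultimately show "p \<in> (\<lambda>(a,b). (n-a-b, a, b)) ` ({-N..N} \<times> {-N..N})" by blast
  qed
  then show ?thesis by (rule finite_subset) auto
qed

lemma Tri_sum: "n > 0 \<Longrightarrow> Tri M t u v x n = sum (summ t u v x n) (Jset M n)"
proof -
  assume n: "n > 0"
  have "infsum (summ t u v x n) (Iset M n) = infsum (summ t u v x n) (Jset M n)"
    by (rule infsum_cong_neutral) (auto simp: Iset_def Jset_def summ_def)
  then show ?thesis using n J_finite by (simp add: Tri_def)
qed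

definition aa :: "real \<Rightarrow> (int \<Rightarrow> complex) \<Rightarrow> int \<Rightarrow> int \<times> int \<times> int \<Rightarrow> real" where
  "aa s u n = (\<lambda>(n1,n2,n3). cmod (m1t n n1 n2 n3) * wt s u n1)"
definition bb :: "real \<Rightarrow> (int \<Rightarrow> complex) \<Rightarrow> (int \<Rightarrow> complex) \<Rightarrow> int \<times> int \<times> int \<Rightarrow> real" where
  "bb s v x = (\<lambda>(n1,n2,n3). wt s v n2 * wt s x (-n3))"

lemma wt_ge: "s \<ge> 0 \<Longrightarrow> cmod (f k) \<le> wt s f k"
proof -
  assume s: "s \<ge> 0"
  have "1 * cmod (f k) \<le> jbr k powr s * cmod (f k)"
    by (rule mult_right_mono[OF jbr_powr_ge1[OF s]]) simp
  then show ?thesis by (simp add: wt_def)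
qed

lemma term_bound:
  assumes s: "s \<ge> 0" and p: "p \<in> Jset M n"
  shows "jbr n powr s * cmod (summ t u v x n p) \<le> aa s u n p * bb s v x p"
proof -
  obtain n1 n2 n3 where pe: "p = (n1,n2,n3)" by (cases p) auto
  have h: "n1+n2+n3 = n" "m1t n n1 n2 n3 \<noteq> 0" using p pe by (auto simp: Jset_def)
  note c = m1t_nz[OF h(2)]
  have n1: "\<bar>n\<bar> \<le> \<bar>n1\<bar>" using c h by linarith
  have ex: "cmod (exp (\<i> * of_real t * of_int (Phi n n1 n2 n3))) = 1"
  proof -
    have "\<i> * of_real t * of_int (Phi n n1 n2 n3) = \<i> * of_real (t * of_int (Phi n n1 n2 n3))" by simp
    then show ?thesis by (simp only: norm_exp_i_times)
  qed
  have cs: "cmod (summ t u v x n p) = cmod (m1t n n1 n2 n3) * cmod (u n1) * cmod (v n2) * cmod (x (-n3))"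
    unfolding pe summ_def star_def by (simp add: norm_mult ex)
  have j1: "jbr n powr s \<le> jbr n1 powr s" by (rule jbr_mono[OF n1 s])
  have j2: "cmod (v n2) \<le> wt s v n2" "cmod (x (-n3)) \<le> wt s x (-n3)"
    using wt_ge[OF s] by auto
  have "jbr n powr s * cmod (summ t u v x n p)
      = (cmod (m1t n n1 n2 n3) * (jbr n powr s * cmod (u n1))) * (cmod (v n2) * cmod (x (-n3)))"
    unfolding cs by (simp add: algebra_simps)
  also have "\<dots> \<le> (cmod (m1t n n1 n2 n3) * wt s u n1) * (wt s v n2 * wt s x (-n3))"
    unfolding wt_def using j1 j2
    by (intro mult_mono mult_left_mono mult_right_mono) (auto simp: wt_def)
  finally show ?thesis by (simp add: pe aa_def bb_def)
qed

lemma Tri_pt: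
  assumes s: "s \<ge> 0" and n: "n > 0"
  shows "(wt s (Tri M t u v x) n)^2 \<le> (\<Sum>p\<in>Jset M n. (aa s u n p)^2) * (\<Sum>p\<in>Jset M n. (bb s v x p)^2)"
proof -
  have "wt s (Tri M t u v x) n = jbr n powr s * cmod (sum (summ t u v x n) (Jset M n))"
    unfolding wt_def Tri_sum[OF n] ..
  also have "\<dots> \<le> jbr n powr s * (\<Sum>p\<in>Jset M n. cmod (summ t u v x n p))"
    by (intro mult_left_mono norm_sum) simp
  also have "\<dots> = (\<Sum>p\<in>Jset M n. jbr n powr s * cmod (summ t u v x n p))"
    by (simp add: sum_distrib_left)
  also have "\<dots> \<le> (\<Sum>p\<in>Jset M n. aa s u n p * bb s v x p)"
    by (rule sum_mono) (rule term_bound[OF s])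
  finally have le: "wt s (Tri M t u v x) n \<le> (\<Sum>p\<in>Jset M n. aa s u n p * bb s v x p)" .
  have "(wt s (Tri M t u v x) n)^2 \<le> (\<Sum>p\<in>Jset M n. aa s u n p * bb s v x p)^2"
    using le wt_nonneg by (intro power_mono) auto
  also have "\<dots> \<le> (\<Sum>p\<in>Jset M n. (aa s u n p)^2) * (\<Sum>p\<in>Jset M n. (bb s v x p)^2)"
    by (rule Cauchy_Schwarz_ineq_sum)
  finally show ?thesis .
qed

lemma bb_bound:
  assumes v: "in_l2s s v" and x: "in_l2s s x"
  shows "(\<Sum>p\<in>Jset M n. (bb s v x p)^2) \<le> nsq s v * nsq s x"
proof -
  define \<phi> where "\<phi> = (\<lambda>(n1::int,n2::int,n3::int). (n2, -n3))"
  have inj: "inj_on \<phi> (Jset M n)" unfolding inj_on_def \<phi>_def Jset_def by auto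
  have "(\<Sum>p\<in>Jset M n. (bb s v x p)^2) = (\<Sum>p\<in>Jset M n. (\<lambda>g. (wt s v (fst g))^2 * (wt s x (snd g))^2) (\<phi> p))"
    by (rule sum.cong) (auto simp: bb_def \<phi>_def power_mult_distrib)
  also have "\<dots> = (\<Sum>g\<in>\<phi> ` Jset M n. (wt s v (fst g))^2 * (wt s x (snd g))^2)"
    by (simp add: sum.reindex[OF inj] o_def)
  also have "\<dots> \<le> (\<Sum>a\<in>fst ` \<phi> ` Jset M n. (wt s v a)^2) * (\<Sum>b\<in>snd ` \<phi> ` Jset M n. (wt s x b)^2)"
    by (rule prod_sum_bound) (use J_finite in auto)
  also have "\<dots> \<le> nsq s v * nsq s x"
    by (intro mult_mono fin_le_nsq v x) (auto intro: sum_nonneg nsq_nonneg J_finite)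
  finally show ?thesis .
qed

definition gg :: "real \<Rightarrow> (int \<Rightarrow> complex) \<Rightarrow> int \<times> int \<times> int \<Rightarrow> real" where
  "gg s u = (\<lambda>(a,b,c). (cmod (m1t (a+b+c) a b c))^2 * (wt s u a)^2)"

lemma Tri_main:
  assumes s: "s \<ge> 0" and u: "in_l2s s u" and v: "in_l2s s v" and x: "in_l2s s x" and F: "finite F"
  shows "(\<Sum>n\<in>F. (wt s (Tri M t u v x) n)^2) \<le> 300 * M^2 * nsq s u * nsq s v * nsq s x"
proof -
  define F' where "F' = {n\<in>F. n > 0}"
  have fF': "finite F'" using F by (simp add: F'_def)
  have "(\<Sum>n\<in>F. (wt s (Tri M t u v x) n)^2) = (\<Sum>n\<in>F'. (wt s (Tri M t u v x) n)^2)"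
    unfolding F'_def by (rule sum.mono_neutral_right) (use F in \<open>auto simp: Tri_def wt_def\<close>)
  also have "\<dots> \<le> (\<Sum>n\<in>F'. (\<Sum>p\<in>Jset M n. (aa s u n p)^2) * (nsq s v * nsq s x))"
  proof (rule sum_mono)
    fix n assume "n \<in> F'"
    then have n: "n > 0" by (simp add: F'_def)
    have "(wt s (Tri M t u v x) n)^2 \<le> (\<Sum>p\<in>Jset M n. (aa s u n p)^2) * (\<Sum>p\<in>Jset M n. (bb s v x p)^2)"
      by (rule Tri_pt[OF s n])
    also have "\<dots> \<le> (\<Sum>p\<in>Jset M n. (aa s u n p)^2) * (nsq s v * nsq s x)"
      by (intro mult_left_mono bb_bound v x) (auto intro: sum_nonneg)
    finally show "(wt s (Tri M t u v x) n)^2 \<le> (\<Sum>p\<in>Jset M n. (aa s u n p)^2) * (nsq s v * nsq s x)" .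
  qed
  also have "\<dots> = (\<Sum>n\<in>F'. \<Sum>p\<in>Jset M n. gg s u p) * (nsq s v * nsq s x)"
    unfolding sum_distrib_right[symmetric]
  proof (intro arg_cong2[where f="(*)"] refl sum.cong)
    fix n p assume "p \<in> Jset M n"
    then show "(aa s u n p)^2 = gg s u p"
      by (auto simp: Jset_def aa_def gg_def power_mult_distrib)
  qed
  also have "(\<Sum>n\<in>F'. \<Sum>p\<in>Jset M n. gg s u p) = (\<Sum>p\<in>(\<Union>n\<in>F'. Jset M n). gg s u p)"
    by (rule sum.UNION_disjoint[symmetric]) (use fF' J_finite in \<open>auto simp: Jset_def\<close>)
  also have "\<dots> \<le> 300 * M^2 * nsq s u"
  proof -
    define K where "K = (\<Union>n\<in>F'. Jset M n)"
    have fK: "finite K" unfolding K_def using fF' J_finite by auto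
    have KS: "K = Sigma (fst ` K) (\<lambda>a. {bc. (a,bc) \<in> K})" by (auto intro: rev_image_eqI)
    have fKa: "finite {bc. (a,bc) \<in> K}" for a
    proof -
      have "{bc. (a,bc) \<in> K} = snd ` (K \<inter> {p. fst p = a})" by (auto intro: rev_image_eqI)
      then show ?thesis using fK by simp
    qed
    have e1: "(\<Sum>p\<in>K. gg s u p) = (\<Sum>p\<in>Sigma (fst ` K) (\<lambda>a. {bc. (a,bc) \<in> K}). gg s u p)"
      by (simp only: KS[symmetric])
    have e2: "(\<Sum>a\<in>fst ` K. \<Sum>bc\<in>{bc. (a,bc) \<in> K}. gg s u (a,bc)) = (\<Sum>(a,bc)\<in>Sigma (fst ` K) (\<lambda>a. {bc. (a,bc) \<in> K}). gg s u (a,bc))"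
      by (rule sum.Sigma) (use fK fKa in auto)
    have "(\<Sum>p\<in>K. gg s u p) = (\<Sum>a\<in>fst ` K. \<Sum>bc\<in>{bc. (a,bc) \<in> K}. gg s u (a,bc))"
      unfolding e1 e2 by (simp add: case_prod_beta)
    also have "\<dots> \<le> (\<Sum>a\<in>fst ` K. (wt s u a)^2 * (300 * M^2))"
    proof (rule sum_mono)
      fix a assume "a \<in> fst ` K"
      have "(\<Sum>bc\<in>{bc. (a,bc) \<in> K}. gg s u (a,bc))
          = (wt s u a)^2 * (\<Sum>(b,c)\<in>{bc. (a,bc) \<in> K}. (cmod (m1t (a+b+c) a b c))^2)"
        unfolding sum_distrib_left gg_def by (rule sum.cong) (auto simp: mult.commute)
      also have "\<dots> \<le> (wt s u a)^2 * (300 * M^2)"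
      proof (rule mult_left_mono)
        show "(\<Sum>(b,c)\<in>{bc. (a,bc) \<in> K}. (cmod (m1t (a+b+c) a b c))^2) \<le> 300 * M^2"
          by (rule inner_bound[OF fKa]) (auto simp: K_def Jset_def)
      qed simp
      finally show "(\<Sum>bc\<in>{bc. (a,bc) \<in> K}. gg s u (a,bc)) \<le> (wt s u a)^2 * (300 * M^2)" .
    qed
    also have "\<dots> = (\<Sum>a\<in>fst ` K. (wt s u a)^2) * (300 * M^2)" by (simp add: sum_distrib_right)
    also have "\<dots> \<le> nsq s u * (300 * M^2)"
      by (intro mult_right_mono fin_le_nsq u) (use fK in auto)
    finally show ?thesis unfolding K_def by (simp add: algebra_simps)
  qed
  finally show ?thesis
    using nsq_nonneg[of s v] nsq_nonneg[of s x]
    by (simp add: mult_right_mono algebra_simps) 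
qed



lemma norm_from_psum:
  assumes b: "\<And>F. finite F \<Longrightarrow> (\<Sum>n\<in>F. (wt s f n)^2) \<le> B^2" and B: "B \<ge> 0"
  shows "in_l2s s f" "l2s_norm s f \<le> B"
proof -
  have nn: "\<And>n. (wt s f n)^2 \<ge> 0" by simp
  show "in_l2s s f" unfolding in_l2s_wt by (rule psum_bound(1)[OF nn b])
  have "nsq s f \<le> B^2" unfolding nsq_def by (rule psum_bound(2)[OF nn b])
  then show "l2s_norm s f \<le> B" unfolding l2s_norm_nsq using B real_le_lsqrt nsq_nonneg
    by (metis real_sqrt_le_mono real_sqrt_pow2 real_sqrt_power)
qed

lemma Tri_single:
  assumes s: "s \<ge> 0" and M: "M > 0" and a: "in_l2s s a"
  shows "l2s_norm s (Tri M t a a a) \<le> 30 * M * (l2s_norm s a)^3"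
proof (rule norm_from_psum(2))
  fix F :: "int set" assume F: "finite F"
  have "(\<Sum>n\<in>F. (wt s (Tri M t a a a) n)^2) \<le> 300 * M^2 * nsq s a * nsq s a * nsq s a"
    by (rule Tri_main[OF s a a a F])
  also have "\<dots> = 300 * (M^2 * (l2s_norm s a)^6)" unfolding nsq_eq by (simp add: algebra_simps power2_eq_square power3_eq_cube eval_nat_numeral)
  also have "\<dots> \<le> 900 * (M^2 * (l2s_norm s a)^6)" using l2s_norm_nonneg[of s a] by simp
  also have "\<dots> = (30 * M * (l2s_norm s a)^3)^2" by (simp add: power_mult_distrib eval_nat_numeral)
  finally show "(\<Sum>n\<in>F. (wt s (Tri M t a a a) n)^2) \<le> (30 * M * (l2s_norm s a)^3)^2" .
qed (use M l2s_norm_nonneg in simp)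

lemma star_diff: "star (a - b) n = star a n - star b n"
  by (simp add: star_def)

lemma Tri_diff:
  "Tri M t a a a n - Tri M t b b b n = Tri M t (a - b) a a n + Tri M t b (a - b) a n + Tri M t b b (a - b) n"
proof (cases "n > 0")
  case True
  show ?thesis unfolding Tri_sum[OF True] sum_subtractf[symmetric] sum.distrib[symmetric]
    by (rule sum.cong) (auto simp: summ_def star_def algebra_simps)
qed (simp add: Tri_def)

lemma sq3: "(x + y + z)^2 \<le> 3 * ((x::real)^2 + y^2 + z^2)"
proof -
  have "0 \<le> (x-y)^2 + (y-z)^2 + (x-z)^2" by simp
  then show ?thesis by (simp add: power2_eq_square algebra_simps)
qed

lemma Tri_difference:
  assumes s: "s \<ge> 0" and M: "M > 0" and a: "in_l2s s a" and b: "in_l2s s b"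
  shows "l2s_norm s (Tri M t a a a - Tri M t b b b)
     \<le> 30 * M * ((l2s_norm s a)^2 + (l2s_norm s b)^2) * l2s_norm s (a - b)"
proof (rule norm_from_psum(2))
  have d: "in_l2s s (a - b)" by (rule l2s_comb(1)[OF a b]) (simp add: norm_triangle_ineq4)
  define A where "A = l2s_norm s a"
  define B where "B = l2s_norm s b"
  define D where "D = l2s_norm s (a - b)"
  have A0: "A \<ge> 0" "B \<ge> 0" "D \<ge> 0" by (simp_all add: A_def B_def D_def l2s_norm_nonneg)
  fix F :: "int set" assume F: "finite F"
  let ?T1 = "Tri M t (a - b) a a" and ?T2 = "Tri M t b (a - b) a" and ?T3 = "Tri M t b b (a - b)"
  have "(\<Sum>n\<in>F. (wt s (Tri M t a a a - Tri M t b b b) n)^2)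
     \<le> (\<Sum>n\<in>F. 3 * ((wt s ?T1 n)^2 + (wt s ?T2 n)^2 + (wt s ?T3 n)^2))"
  proof (rule sum_mono)
    fix n
    have "wt s (Tri M t a a a - Tri M t b b b) n \<le> wt s ?T1 n + wt s ?T2 n + wt s ?T3 n"
      unfolding wt_def fun_diff_def Tri_diff distrib_left[symmetric]
      using jbr_powr_ge1[OF s, of n]
      by (intro mult_left_mono) (auto intro: order_trans[OF norm_triangle_ineq add_right_mono] norm_triangle_ineq)
    then have "(wt s (Tri M t a a a - Tri M t b b b) n)^2 \<le> (wt s ?T1 n + wt s ?T2 n + wt s ?T3 n)^2"
      using wt_nonneg by (intro power_mono) auto
    also have "\<dots> \<le> 3 * ((wt s ?T1 n)^2 + (wt s ?T2 n)^2 + (wt s ?T3 n)^2)" by (rule sq3)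
    finally show "(wt s (Tri M t a a a - Tri M t b b b) n)^2 \<le> 3 * ((wt s ?T1 n)^2 + (wt s ?T2 n)^2 + (wt s ?T3 n)^2)" .
  qed
  also have "\<dots> = 3 * ((\<Sum>n\<in>F. (wt s ?T1 n)^2) + (\<Sum>n\<in>F. (wt s ?T2 n)^2) + (\<Sum>n\<in>F. (wt s ?T3 n)^2))"
    by (simp add: sum_distrib_left sum.distrib)
  also have "\<dots> \<le> 3 * (300 * M^2 * nsq s (a-b) * nsq s a * nsq s a + 300 * M^2 * nsq s b * nsq s (a-b) * nsq s a
                  + 300 * M^2 * nsq s b * nsq s b * nsq s (a-b))"
    using Tri_main[OF s d a a F, of M t] Tri_main[OF s b d a F, of M t] Tri_main[OF s b b d F, of M t] by simp
  also have "\<dots> = 900 * M^2 * D^2 * (A^2 * A^2 + B^2 * A^2 + B^2 * B^2)"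
    unfolding nsq_eq A_def B_def D_def by (simp add: algebra_simps)
  also have "\<dots> \<le> 900 * M^2 * D^2 * (A^2 + B^2)^2"
  proof (rule mult_left_mono)
    have "0 \<le> A^2 * B^2" by simp
    then show "A^2 * A^2 + B^2 * A^2 + B^2 * B^2 \<le> (A^2 + B^2)^2" by (simp add: power2_sum algebra_simps)
  qed simp
  also have "\<dots> = (30 * M * (A^2 + B^2) * D)^2" by (simp add: power_mult_distrib)
  finally show "(\<Sum>n\<in>F. (wt s (Tri M t a a a - Tri M t b b b) n)^2) \<le> (30 * M * ((l2s_norm s a)^2 + (l2s_norm s b)^2) * l2s_norm s (a - b))^2"
    by (simp add: A_def B_def D_def)
qed (use M l2s_norm_nonneg in simp)



lemma in_l2s_diff: "in_l2s s a \<Longrightarrow> in_l2s s b \<Longrightarrow> in_l2s s (a - b)"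
  by (rule l2s_comb(1)[of s a b "a - b"]) (auto simp: norm_triangle_ineq4)

lemma norm_diff_le: "in_l2s s a \<Longrightarrow> in_l2s s b \<Longrightarrow> l2s_norm s (a - b) \<le> l2s_norm s a + l2s_norm s b"
  by (rule l2s_comb(2)[of s a b "a - b"]) (auto simp: norm_triangle_ineq4)

lemma norm_lip:
  assumes a: "in_l2s s a" and b: "in_l2s s b"
  shows "\<bar>l2s_norm s a - l2s_norm s b\<bar> \<le> l2s_norm s (a - b)"
proof -
  have d: "in_l2s s (a - b)" "in_l2s s (b - a)" using in_l2s_diff a b by auto
  have sym: "l2s_norm s (b - a) = l2s_norm s (a - b)"
    unfolding l2s_norm_def by (simp add: norm_minus_commute)
  have 1: "l2s_norm s a \<le> l2s_norm s b + l2s_norm s (a - b)"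
    by (rule l2s_comb(2)[OF b d(1)]) (simp add: norm_triangle_sub)
  have 2: "l2s_norm s b \<le> l2s_norm s a + l2s_norm s (b - a)"
    by (rule l2s_comb(2)[OF a d(2)]) (simp add: norm_triangle_sub)
  show ?thesis using 1 2 sym by linarith
qed

lemma CT_bdd:
  assumes w: "in_CT_l2s s T w"
  shows "bdd_above ((\<lambda>t. l2s_norm s (w t)) ` {0..T})"
proof -
  have l2: "\<And>t. t \<in> {0..T} \<Longrightarrow> in_l2s s (w t)" using w by (simp add: in_CT_l2s_def)
  have "continuous_on {0..T} (\<lambda>t. l2s_norm s (w t))"
    unfolding continuous_on_def
  proof
    fix t0 assume t0: "t0 \<in> {0..T}"
    have lim: "((\<lambda>t. l2s_norm s (w t - w t0)) \<longlongrightarrow> 0) (at t0 within {0..T})"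
      using w t0 by (simp add: in_CT_l2s_def)
    have ev: "eventually (\<lambda>t. norm (l2s_norm s (w t) - l2s_norm s (w t0)) \<le> l2s_norm s (w t - w t0)) (at t0 within {0..T})"
      unfolding eventually_at
      by (rule exI[of _ 1]) (use norm_lip l2 t0 in auto)
    show "((\<lambda>t. l2s_norm s (w t)) \<longlongrightarrow> l2s_norm s (w t0)) (at t0 within {0..T})"
      by (rule LIM_zero_cancel, rule Lim_null_comparison[OF ev lim])
  qed
  then have "compact ((\<lambda>t. l2s_norm s (w t)) ` {0..T})"
    by (rule compact_continuous_image) simp
  then show ?thesis by (intro bounded_imp_bdd_above compact_imp_bounded)
qed

theorem lemma3p2:
  fixes s :: real
  assumes "s \<ge> 0"
  shows "\<exists>C::real. \<forall>M T w w'. M > 0 \<longrightarrow> T > 0 \<longrightarrow> in_CT_l2s s T w \<longrightarrow> in_CT_l2s s T w' \<longrightarrow>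
     CT_norm s T (NR M w) \<le> C * M * (CT_norm s T w)^3 \<and>
     CT_norm s T (\<lambda>t. NR M w t - NR M w' t)
       \<le> C * M * ((CT_norm s T w)^2 + (CT_norm s T w')^2) * CT_norm s T (\<lambda>t. w t - w' t)"
proof (intro exI[of _ 30] allI impI conjI)
  fix M T :: real and w w' :: "real \<Rightarrow> int \<Rightarrow> complex"
  assume M: "M > 0" and T: "T > 0" and w: "in_CT_l2s s T w" and w': "in_CT_l2s s T w'"
  note s = assms
  define S where "S = {0..T}"
  have Sne: "S \<noteq> {}" using T by (simp add: S_def)
  have l2: "\<And>t. t \<in> S \<Longrightarrow> in_l2s s (w t)" "\<And>t. t \<in> S \<Longrightarrow> in_l2s s (w' t)"
    using w w' by (auto simp: in_CT_l2s_def S_def)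
  have bw: "bdd_above ((\<lambda>t. l2s_norm s (w t)) ` S)" using CT_bdd[OF w] by (simp add: S_def)
  have bw': "bdd_above ((\<lambda>t. l2s_norm s (w' t)) ` S)" using CT_bdd[OF w'] by (simp add: S_def)
  have bd: "bdd_above ((\<lambda>t. l2s_norm s (w t - w' t)) ` S)"
  proof -
    obtain A where A: "\<And>t. t \<in> S \<Longrightarrow> l2s_norm s (w t) \<le> A" using bw by (auto simp: bdd_above_def)
    obtain B where B: "\<And>t. t \<in> S \<Longrightarrow> l2s_norm s (w' t) \<le> B" using bw' by (auto simp: bdd_above_def)
    have "\<And>t. t \<in> S \<Longrightarrow> l2s_norm s (w t - w' t) \<le> A + B"
      using norm_diff_le l2 A B by (smt (verit))
    then show ?thesis by (auto simp: bdd_above_def)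
  qed
  define CW where "CW = CT_norm s T w"
  define CW' where "CW' = CT_norm s T w'"
  define CD where "CD = CT_norm s T (\<lambda>t. w t - w' t)"
  have leW: "\<And>t. t \<in> S \<Longrightarrow> l2s_norm s (w t) \<le> CW"
    unfolding CW_def CT_norm_def S_def[symmetric] by (rule cSUP_upper[OF _ bw])
  have leW': "\<And>t. t \<in> S \<Longrightarrow> l2s_norm s (w' t) \<le> CW'"
    unfolding CW'_def CT_norm_def S_def[symmetric] by (rule cSUP_upper[OF _ bw'])
  have leD: "\<And>t. t \<in> S \<Longrightarrow> l2s_norm s (w t - w' t) \<le> CD"
    unfolding CD_def CT_norm_def S_def[symmetric] by (rule cSUP_upper[OF _ bd])
  have t0: "0 \<in> S" using T by (simp add: S_def)
  have pos: "CW \<ge> 0" "CW' \<ge> 0" "CD \<ge> 0"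
    using leW[OF t0] leW'[OF t0] leD[OF t0] l2s_norm_nonneg by (meson order_trans)+
  show "CT_norm s T (NR M w) \<le> 30 * M * (CT_norm s T w)^3"
    unfolding CW_def[symmetric] unfolding CT_norm_def S_def[symmetric]
  proof (rule cSUP_least[OF Sne])
    fix t assume t: "t \<in> S"
    have "l2s_norm s (NR M w t) \<le> 30 * M * (l2s_norm s (w t))^3"
      unfolding NR_Tri by (rule Tri_single[OF s M l2(1)[OF t]])
    also have "\<dots> \<le> 30 * M * CW^3"
      using leW[OF t] l2s_norm_nonneg M by (intro mult_left_mono power_mono) auto
    finally show "l2s_norm s (NR M w t) \<le> 30 * M * CW^3" .
  qed
  show "CT_norm s T (\<lambda>t. NR M w t - NR M w' t)
       \<le> 30 * M * ((CT_norm s T w)^2 + (CT_norm s T w')^2) * CT_norm s T (\<lambda>t. w t - w' t)"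
    unfolding CD_def[symmetric] CW_def[symmetric] CW'_def[symmetric]
    unfolding CT_norm_def S_def[symmetric]
  proof (rule cSUP_least[OF Sne])
    fix t assume t: "t \<in> S"
    have "l2s_norm s (NR M w t - NR M w' t) \<le> 30 * M * ((l2s_norm s (w t))^2 + (l2s_norm s (w' t))^2) * l2s_norm s (w t - w' t)"
      unfolding NR_Tri by (rule Tri_difference[OF s M l2(1)[OF t] l2(2)[OF t]])
    also have "\<dots> \<le> 30 * M * (CW^2 + CW'^2) * CD"
      using leW[OF t] leW'[OF t] leD[OF t] l2s_norm_nonneg[of s] M pos
      by (intro mult_mono mult_left_mono add_mono power_mono) auto
    finally show "l2s_norm s (NR M w t - NR M w' t) \<le> 30 * M * (CW^2 + CW'^2) * CD" .
  qed
qed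


end
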